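(* Consider the feedback loop described in the context, where $\tilde G$ is given by a proper real rational transfer-function matrix whose transfer function from $r_h$ to $t$ is scalar and strictly proper, $\tilde w$ is a white noise process jointly second-order with the initial state $\tilde x_0$ of $\tilde G$, and the ECDQ has finite positive step $\Delta$. If the dither $d$ is i.i.d., uniformly distributed on $(-\Delta/2,\Delta/2)$ and independent of $(\tilde w,\tilde x_0)$, then the error $r-t$ is i.i.d., uniformly distributed on $(-\Delta/2,\Delta/2)$, and independent of $(\tilde w,\tilde x_0)$.
   Context: The plant $\tilde G$ has inputs $(\tilde w,r_h)$ and outputs $(\tilde z,t)$, with $t$ scalar. The feedback path from $t$ to $r_h$ is an entropy-coded dithered quantizer (ECDQ) with a channel delay $h\in\mathbb N_0$: $y_{\mathcal E}(k)=\mathcal F_q(t(k)+d(k))$, where $\mathcal F_q:\mathbb R\to\{i\Delta:i\in\mathbb Z\}$ is a uniform quantizer with step $\Delta$; $y_q(k)=\mathcal O_k(y_{\mathcal E}(k),d(k))$ is a lossless (entropy) encoding; the channel delivers $u_q(k)=y_q(k-h)$ error-free; $u_{\mathcal D}(k)=\mathcal O^{-1}_{k-h}(u_q(k),d(k-h))=y_{\mathcal E}(k-h)$ is the lossless decoding; and $r_h(k)=u_{\mathcal D}(k)-d(k-h)$. The dither $d$ is known to both encoder and decoder. Define $r(k)=y_{\mathcal E}(k)-d(k)$, so that $r_h(k)=r(k-h)$. *)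

theory Defs
  imports "HOL-Probability.Probability"
begin

text \<open>Uniform (mid-tread, nearest-point) quantizer with step Delta, mapping the reals
  onto the lattice of integer multiples of Delta (ties rounded upwards).\<close>
definition uniform_quantizer :: "real \<Rightarrow> real \<Rightarrow> real" where
  "uniform_quantizer \<Delta> y = \<Delta> * of_int \<lfloor>y / \<Delta> + 1/2\<rfloor>"

definition unif_quant_noise :: "real \<Rightarrow> real measure" where
  "unif_quant_noise \<Delta> = uniform_measure lborel {-\<Delta>/2<..<\<Delta>/2}"

definition white_noise :: "'a measure \<Rightarrow> (nat \<Rightarrow> 'a \<Rightarrow> real^'m) \<Rightarrow> bool" where
  "white_noise M w \<longleftrightarrow>
     (\<forall>k. w k \<in> borel_measurable M) \<and>
     (\<forall>k i. integrable M (\<lambda>\<omega>. (w k \<omega> $ i)^2)) \<and>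
     (\<forall>k i. (\<integral>\<omega>. w k \<omega> $ i \<partial>M) = 0) \<and>
     (\<forall>k j i l. k \<noteq> j \<longrightarrow> (\<integral>\<omega>. w k \<omega> $ i * w j \<omega> $ l \<partial>M) = 0) \<and>
     (\<forall>k i l. (\<integral>\<omega>. w k \<omega> $ i * w k \<omega> $ l \<partial>M) = (\<integral>\<omega>. w 0 \<omega> $ i * w 0 \<omega> $ l \<partial>M))"

definition second_order :: "'a measure \<Rightarrow> ('a \<Rightarrow> real^'n) \<Rightarrow> bool" where
  "second_order M x \<longleftrightarrow> x \<in> borel_measurable M \<and> (\<forall>i. integrable M (\<lambda>\<omega>. (x \<omega> $ i)^2))"

text \<open>Independence of two random elements taking values in (possibly) different
  measurable spaces: independence of the generated sigma-algebras (this is exactly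
  what the library's indep_var unfolds to, cf. prob_space.indep_var_eq, without
  requiring equal value types).\<close>
definition indep_rv :: "'a measure \<Rightarrow> 'b measure \<Rightarrow> ('a \<Rightarrow> 'b) \<Rightarrow> 'c measure \<Rightarrow> ('a \<Rightarrow> 'c) \<Rightarrow> bool" where
  "indep_rv M S X T Y \<longleftrightarrow>
     X \<in> measurable M S \<and> Y \<in> measurable M T \<and>
     prob_space.indep_set M
       (sigma_sets (space M) { X -` A \<inter> space M | A. A \<in> sets S})
       (sigma_sets (space M) { Y -` A \<inter> space M | A. A \<in> sets T})"

end

theory Submission
  imports Defs
begin

lemma lborel_refl_emeasure:
  fixes b :: real
  assumes S: "S \<in> sets borel"
  shows "emeasure lborel ((\<lambda>u. b - u) -` S) = emeasure lborel S"
proof -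
  have "lborel = density (distr lborel borel (\<lambda>x. b + (-1) * x)) (\<lambda>_. \<bar>-1::real\<bar>)"
    by (rule lborel_real_affine) simp
  then have d: "distr lborel borel (\<lambda>x. b - x) = (lborel :: real measure)"
    by (simp add: density_1)
  have "emeasure lborel S = emeasure (distr lborel borel (\<lambda>x. b - x)) S"
    by (subst d) simp
  also have "\<dots> = emeasure lborel ((\<lambda>u. b - u) -` S \<inter> space lborel)"
    using S by (intro emeasure_distr) auto
  finally show ?thesis by simp
qed

lemma quant_floor:
  fixes \<Delta> c u :: real
  assumes \<Delta>: "0 < \<Delta>" and u: "-\<Delta>/2 < u" "u < \<Delta>/2"
  defines "a \<equiv> c - \<Delta> * of_int \<lfloor>c/\<Delta>\<rfloor>"
  shows "a + u < \<Delta>/2 \<Longrightarrow> uniform_quantizer \<Delta> (c+u) - (c+u) = - (a+u)"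
    and "\<not> a + u < \<Delta>/2 \<Longrightarrow> uniform_quantizer \<Delta> (c+u) - (c+u) = \<Delta> - (a+u)"
proof -
  have a0: "0 \<le> a" and a1: "a < \<Delta>"
  proof -
    have f1: "of_int \<lfloor>c/\<Delta>\<rfloor> \<le> c/\<Delta>" "c/\<Delta> < of_int \<lfloor>c/\<Delta>\<rfloor> + 1" by linarith+
    have "\<Delta> * of_int \<lfloor>c/\<Delta>\<rfloor> \<le> c" using f1(1) \<Delta> by (simp add: le_divide_eq mult.commute)
    moreover have "c < \<Delta> * (of_int \<lfloor>c/\<Delta>\<rfloor> + 1)" using f1(2) pos_divide_less_eq[OF \<Delta>] by (metis mult.commute)
    ultimately show "0 \<le> a" "a < \<Delta>" unfolding a_def by (auto simp: algebra_simps)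
  qed
  show "a + u < \<Delta>/2 \<Longrightarrow> uniform_quantizer \<Delta> (c+u) - (c+u) = - (a+u)"
  proof -
    assume h: "a + u < \<Delta>/2"
    have "\<lfloor>(c+u)/\<Delta> + 1/2\<rfloor> = \<lfloor>c/\<Delta>\<rfloor>"
      using \<Delta> u a0 h by (intro floor_unique) (auto simp: a_def field_simps)
    then show ?thesis using \<Delta> by (simp add: uniform_quantizer_def a_def algebra_simps)
  qed
  show "\<not> a + u < \<Delta>/2 \<Longrightarrow> uniform_quantizer \<Delta> (c+u) - (c+u) = \<Delta> - (a+u)"
  proof -
    assume h: "\<not> a + u < \<Delta>/2"
    have "\<lfloor>(c+u)/\<Delta> + 1/2\<rfloor> = \<lfloor>c/\<Delta>\<rfloor> + 1"
      using \<Delta> u a1 h by (intro floor_unique) (auto simp: a_def field_simps)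
    then show ?thesis using \<Delta> by (simp add: uniform_quantizer_def a_def algebra_simps)
  qed
qed

lemma uq_measurable[measurable]: "uniform_quantizer \<Delta> \<in> borel_measurable borel"
  unfolding uniform_quantizer_def[abs_def] by measurable

lemma rot_emeasure:
  fixes \<Delta> c :: real
  assumes \<Delta>: "0 < \<Delta>" and B: "B \<in> sets borel"
  shows "emeasure lborel {u \<in> {-\<Delta>/2<..<\<Delta>/2}. uniform_quantizer \<Delta> (c+u) - (c+u) \<in> B}
       = emeasure lborel (B \<inter> {-\<Delta>/2<..<\<Delta>/2})"
proof -
  define a where "a = c - \<Delta> * of_int \<lfloor>c/\<Delta>\<rfloor>"
  have a0: "0 \<le> a" and a1: "a < \<Delta>"
  proof -
    have f1: "of_int \<lfloor>c/\<Delta>\<rfloor> \<le> c/\<Delta>" "c/\<Delta> < of_int \<lfloor>c/\<Delta>\<rfloor> + 1" by linarith+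
    have "\<Delta> * of_int \<lfloor>c/\<Delta>\<rfloor> \<le> c" using f1(1) \<Delta> by (simp add: le_divide_eq mult.commute)
    moreover have "c < \<Delta> * (of_int \<lfloor>c/\<Delta>\<rfloor> + 1)" using f1(2) pos_divide_less_eq[OF \<Delta>] by (metis mult.commute)
    ultimately show "0 \<le> a" "a < \<Delta>" unfolding a_def by (auto simp: algebra_simps)
  qed
  let ?S1 = "B \<inter> {-\<Delta>/2<..<\<Delta>/2-a}" and ?S2 = "B \<inter> {\<Delta>/2-a<..\<Delta>/2}"
  have eq: "{u \<in> {-\<Delta>/2<..<\<Delta>/2}. uniform_quantizer \<Delta> (c+u) - (c+u) \<in> B}
      = ((\<lambda>u. (-a) - u) -` ?S1) \<union> ((\<lambda>u. (\<Delta>-a) - u) -` ?S2)"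
  proof (intro set_eqI iffI)
    fix u assume u: "u \<in> {u \<in> {-\<Delta>/2<..<\<Delta>/2}. uniform_quantizer \<Delta> (c+u) - (c+u) \<in> B}"
    show "u \<in> ((\<lambda>u. (-a) - u) -` ?S1) \<union> ((\<lambda>u. (\<Delta>-a) - u) -` ?S2)"
    proof (cases "a + u < \<Delta>/2")
      case True
      have u': "-\<Delta>/2 < u" "u < \<Delta>/2" and mem: "uniform_quantizer \<Delta> (c+u) - (c+u) \<in> B" using u by auto
      have e: "uniform_quantizer \<Delta> (c+u) - (c+u) = -a - u" using quant_floor(1)[OF \<Delta> u', of c, folded a_def] True by simp
      have "-a - u \<in> B" using mem e by metis
      then show ?thesis using u' True a0 by auto
    next
      case False
      have u': "-\<Delta>/2 < u" "u < \<Delta>/2" and mem: "uniform_quantizer \<Delta> (c+u) - (c+u) \<in> B" using u by auto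
      have e: "uniform_quantizer \<Delta> (c+u) - (c+u) = \<Delta> - a - u" using quant_floor(2)[OF \<Delta> u', of c, folded a_def] False by simp
      have "\<Delta> - a - u \<in> B" using mem e by metis
      then show ?thesis using u' False a0 by auto
    qed
  next
    fix u assume u: "u \<in> ((\<lambda>u. (-a) - u) -` ?S1) \<union> ((\<lambda>u. (\<Delta>-a) - u) -` ?S2)"
    then show "u \<in> {u \<in> {-\<Delta>/2<..<\<Delta>/2}. uniform_quantizer \<Delta> (c+u) - (c+u) \<in> B}"
    proof
      assume h: "u \<in> (\<lambda>u. (-a) - u) -` ?S1"
      then have "-\<Delta>/2 < u" "u < \<Delta>/2" "a + u < \<Delta>/2" using a0 by auto
      moreover have e: "uniform_quantizer \<Delta> (c+u) - (c+u) = -a - u" using quant_floor(1)[OF \<Delta>, of u c, folded a_def] calculation by simp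
      moreover have "-a-u \<in> B" using h by auto
      ultimately show ?thesis by (metis (mono_tags, lifting) greaterThanLessThan_iff mem_Collect_eq)
    next
      assume h: "u \<in> (\<lambda>u. (\<Delta>-a) - u) -` ?S2"
      then have "-\<Delta>/2 < u" "u < \<Delta>/2" "\<not> a + u < \<Delta>/2" using a1 by auto
      moreover have e: "uniform_quantizer \<Delta> (c+u) - (c+u) = \<Delta> - a - u" using quant_floor(2)[OF \<Delta>, of u c, folded a_def] calculation by simp
      moreover have "\<Delta>-a-u \<in> B" using h by auto
      ultimately show ?thesis by (metis (mono_tags, lifting) greaterThanLessThan_iff mem_Collect_eq)
    qed
  qed
  have disj: "((\<lambda>u. (-a) - u) -` ?S1) \<inter> ((\<lambda>u. (\<Delta>-a) - u) -` ?S2) = {}"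
    by auto
  have "emeasure lborel {u \<in> {-\<Delta>/2<..<\<Delta>/2}. uniform_quantizer \<Delta> (c+u) - (c+u) \<in> B}
      = emeasure lborel ((\<lambda>u. (-a) - u) -` ?S1) + emeasure lborel ((\<lambda>u. (\<Delta>-a) - u) -` ?S2)"
    unfolding eq using B disj
    by (intro plus_emeasure[symmetric]) (auto simp: measurable_sets_borel)
  also have "\<dots> = emeasure lborel ?S1 + emeasure lborel ?S2"
    using B by (simp only: lborel_refl_emeasure sets.Int sets_lborel borel_open borel_closed atLeastAtMost_borel greaterThanLessThan_borel greaterThanAtMost_borel)
  also have "\<dots> = emeasure lborel (?S1 \<union> ?S2)"
    using B by (intro plus_emeasure) auto
  also have "\<dots> = emeasure lborel ((?S1 \<union> ?S2) \<union> (B \<inter> {\<Delta>/2-a, \<Delta>/2}))"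
    using B by (intro emeasure_Un_null_set[symmetric]) (auto intro: null_sets_subset[OF finite_imp_null_set_lborel[of "{\<Delta>/2-a, \<Delta>/2}"]])
  also have "(?S1 \<union> ?S2) \<union> (B \<inter> {\<Delta>/2-a, \<Delta>/2}) = (B \<inter> {-\<Delta>/2<..<\<Delta>/2}) \<union> (B \<inter> {\<Delta>/2-a, \<Delta>/2})"
    using a0 a1 \<Delta> by auto
  also have "emeasure lborel \<dots> = emeasure lborel (B \<inter> {-\<Delta>/2<..<\<Delta>/2})"
    using B by (intro emeasure_Un_null_set) (auto intro: null_sets_subset[OF finite_imp_null_set_lborel[of "{\<Delta>/2-a, \<Delta>/2}"]])
  finally show ?thesis .
qed

lemma rot_distr:
  fixes \<Delta> c :: real
  assumes \<Delta>: "0 < \<Delta>"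
  shows "distr (unif_quant_noise \<Delta>) borel (\<lambda>u. uniform_quantizer \<Delta> (c+u) - (c+u)) = unif_quant_noise \<Delta>"
proof (rule measure_eqI)
  show "sets (distr (unif_quant_noise \<Delta>) borel (\<lambda>u. uniform_quantizer \<Delta> (c+u) - (c+u))) = sets (unif_quant_noise \<Delta>)"
    by (simp add: unif_quant_noise_def)
  fix B assume "B \<in> sets (distr (unif_quant_noise \<Delta>) borel (\<lambda>u. uniform_quantizer \<Delta> (c+u) - (c+u)))"
  then have B: "B \<in> sets borel" by simp
  have m: "(\<lambda>u. uniform_quantizer \<Delta> (c+u) - (c+u)) \<in> measurable (unif_quant_noise \<Delta>) borel"
    unfolding unif_quant_noise_def by (subst measurable_cong_sets[OF sets_uniform_measure refl]) measurable
  have "emeasure (distr (unif_quant_noise \<Delta>) borel (\<lambda>u. uniform_quantizer \<Delta> (c+u) - (c+u))) B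
      = emeasure (unif_quant_noise \<Delta>) ((\<lambda>u. uniform_quantizer \<Delta> (c+u) - (c+u)) -` B \<inter> space (unif_quant_noise \<Delta>))"
    using B m by (simp add: emeasure_distr)
  also have "\<dots> = emeasure lborel ({-\<Delta>/2<..<\<Delta>/2} \<inter> ((\<lambda>u. uniform_quantizer \<Delta> (c+u) - (c+u)) -` B)) / emeasure lborel {-\<Delta>/2<..<\<Delta>/2}"
    using B by (simp add: unif_quant_noise_def measurable_sets_borel[OF _ B])
  also have "{-\<Delta>/2<..<\<Delta>/2} \<inter> ((\<lambda>u. uniform_quantizer \<Delta> (c+u) - (c+u)) -` B) = {u \<in> {-\<Delta>/2<..<\<Delta>/2}. uniform_quantizer \<Delta> (c+u) - (c+u) \<in> B}"
    by auto
  also have "emeasure lborel \<dots> = emeasure lborel (B \<inter> {-\<Delta>/2<..<\<Delta>/2})"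
    by (rule rot_emeasure[OF \<Delta> B])
  also have "\<dots> / emeasure lborel {-\<Delta>/2<..<\<Delta>/2} = emeasure (unif_quant_noise \<Delta>) B"
    using B by (simp add: unif_quant_noise_def Int_commute)
  finally show "emeasure (distr (unif_quant_noise \<Delta>) borel (\<lambda>u. uniform_quantizer \<Delta> (c+u) - (c+u))) B = emeasure (unif_quant_noise \<Delta>) B" .
qed

lemma indep_rv_distr_eq:
  assumes P: "prob_space M" and X: "X \<in> measurable M S" and Y: "Y \<in> measurable M T"
  shows "indep_rv M S X T Y \<longleftrightarrow>
    distr M S X \<Otimes>\<^sub>M distr M T Y = distr M (S \<Otimes>\<^sub>M T) (\<lambda>x. (X x, Y x))"
proof -
  interpret prob_space M by fact
  have XY: "(\<lambda>x. (X x, Y x)) \<in> measurable M (S \<Otimes>\<^sub>M T)"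
    using X Y by (rule measurable_Pair)
  let ?S = "distr M S X" and ?T = "distr M T Y" and ?J = "distr M (S \<Otimes>\<^sub>M T) (\<lambda>x. (X x, Y x))"
  interpret X: prob_space ?S by (rule prob_space_distr) fact
  interpret Y: prob_space ?T by (rule prob_space_distr) fact
  interpret XY: pair_prob_space ?S ?T ..
  show ?thesis
  proof
    assume ind: "indep_rv M S X T Y"
    then have ind': "indep_set (sigma_sets (space M) { X -` A \<inter> space M | A. A \<in> sets S})
       (sigma_sets (space M) { Y -` A \<inter> space M | A. A \<in> sets T})"
      unfolding indep_rv_def by simp
    show "?S \<Otimes>\<^sub>M ?T = ?J"
    proof (rule pair_measure_eqI)
      show "sigma_finite_measure ?S" ..
      show "sigma_finite_measure ?T" ..
      fix A B assume A: "A \<in> sets ?S" and B: "B \<in> sets ?T"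
      have "emeasure ?J (A \<times> B) = emeasure M ((\<lambda>x. (X x, Y x)) -` (A \<times> B) \<inter> space M)"
        using A B by (intro emeasure_distr[OF XY]) auto
      also have "(\<lambda>x. (X x, Y x)) -` (A \<times> B) \<inter> space M = (X -` A \<inter> space M) \<inter> (Y -` B \<inter> space M)"
        by auto
      also have "emeasure M \<dots> = emeasure M (X -` A \<inter> space M) * emeasure M (Y -` B \<inter> space M)"
      proof -
        have a: "X -` A \<inter> space M \<in> sigma_sets (space M) {X -` A \<inter> space M |A. A \<in> sets S}"
          using A by (intro sigma_sets.Basic) auto
        have b: "Y -` B \<inter> space M \<in> sigma_sets (space M) {Y -` A \<inter> space M |A. A \<in> sets T}"
          using B by (intro sigma_sets.Basic) auto
        show ?thesis
          using indep_setD[OF ind' a b]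
          by (simp add: emeasure_eq_measure measure_nonneg ennreal_mult)
      qed
      also have "\<dots> = emeasure ?S A * emeasure ?T B"
        using X Y A B by (simp add: emeasure_distr)
      finally show "emeasure ?S A * emeasure ?T B = emeasure ?J (A \<times> B)" by simp
    qed simp
  next
    assume eq: "?S \<Otimes>\<^sub>M ?T = ?J"
    { fix S and X :: "'a \<Rightarrow> 'z"
      have "Int_stable {X -` A \<inter> space M |A. A \<in> sets S}"
      proof (safe intro!: Int_stableI)
        fix A B assume "A \<in> sets S" "B \<in> sets S"
        then show "\<exists>C. (X -` A \<inter> space M) \<inter> (X -` B \<inter> space M) = (X -` C \<inter> space M) \<and> C \<in> sets S"
          by (intro exI[of _ "A \<inter> B"]) auto
      qed }
    note Int_stable = this
    show "indep_rv M S X T Y" unfolding indep_rv_def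
    proof (intro conjI indep_set_sigma_sets Int_stable X Y)
      show "indep_set {X -` A \<inter> space M |A. A \<in> sets S} {Y -` A \<inter> space M |A. A \<in> sets T}"
      proof (safe intro!: indep_setI)
        { fix A assume "A \<in> sets S" then show "X -` A \<inter> space M \<in> sets M"
          using X by (auto intro: measurable_sets) }
        { fix A assume "A \<in> sets T" then show "Y -` A \<inter> space M \<in> sets M"
          using Y by (auto intro: measurable_sets) }
      next
        fix A B assume ab: "A \<in> sets S" "B \<in> sets T"
        then have "prob ((X -` A \<inter> space M) \<inter> (Y -` B \<inter> space M)) = emeasure ?J (A \<times> B)"
          using XY by (auto simp add: emeasure_distr emeasure_eq_measure measure_nonneg intro!: arg_cong[where f="prob"])
        also have "\<dots> = emeasure (?S \<Otimes>\<^sub>M ?T) (A \<times> B)"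
          unfolding eq ..
        also have "\<dots> = emeasure ?S A * emeasure ?T B"
          using ab by (simp add: Y.emeasure_pair_measure_Times)
        finally show "prob ((X -` A \<inter> space M) \<inter> (Y -` B \<inter> space M)) =
          prob (X -` A \<inter> space M) * prob (Y -` B \<inter> space M)"
          using X Y ab by (simp add: emeasure_eq_measure emeasure_distr measure_nonneg ennreal_mult[symmetric])
      qed
    qed
  qed
qed

lemma space_PiM_borelish:
  assumes "sets N = sets (borel :: real measure)"
  shows "space N = UNIV" "space (PiM I (\<lambda>_. N)) = (\<Pi>\<^sub>E i\<in>I. UNIV)"
  using sets_eq_imp_space_eq[OF assms] by (auto simp: space_PiM)

lemma fiber_emeasure:
  fixes N :: "real measure" and n :: nat
  assumes N: "prob_space N" "sets N = sets borel"
  assumes E: "E \<in> sets (PiM UNIV (\<lambda>_. N))"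
  shows "emeasure (PiM UNIV (\<lambda>_. N)) E =
     (\<integral>\<^sup>+X. emeasure N {u \<in> space N. X(n:=u) \<in> E} \<partial>(PiM (UNIV - {n}) (\<lambda>_. N)))"
proof -
  let ?P = "PiM (UNIV - {n}) (\<lambda>_. N)"
  interpret N: prob_space N by fact
  interpret P': prob_space ?P by (intro prob_space_PiM N)
  interpret pair_sigma_finite N ?P ..
  have ins: "insert n (UNIV - {n}) = UNIV" by auto
  have D: "distr (N \<Otimes>\<^sub>M ?P) (PiM UNIV (\<lambda>_. N)) (\<lambda>(x, X). X(n := x)) = PiM UNIV (\<lambda>_. N)"
    using distr_pair_PiM_eq_PiM[of "UNIV - {n}" "\<lambda>_. N" n] N(1) unfolding ins by simp
  have m: "(\<lambda>(x, X). X(n := x)) \<in> measurable (N \<Otimes>\<^sub>M ?P) (PiM UNIV (\<lambda>_. N))"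
  proof -
    have "(\<lambda>(x, X). X(n := x)) \<in> measurable (N \<Otimes>\<^sub>M ?P) (PiM (insert n (UNIV - {n})) (\<lambda>_. N))"
      by measurable
    then show ?thesis unfolding ins .
  qed
  have "emeasure (PiM UNIV (\<lambda>_. N)) E = emeasure (N \<Otimes>\<^sub>M ?P) ((\<lambda>(x, X). X(n := x)) -` E \<inter> space (N \<Otimes>\<^sub>M ?P))"
    by (subst D[symmetric]) (simp add: emeasure_distr[OF m] E)
  also have "\<dots> = (\<integral>\<^sup>+X. emeasure N ((\<lambda>x. (x, X)) -` ((\<lambda>(x, X). X(n := x)) -` E \<inter> space (N \<Otimes>\<^sub>M ?P))) \<partial>?P)"
    by (intro emeasure_pair_measure_alt2 measurable_sets[OF m E])
  also have "\<dots> = (\<integral>\<^sup>+X. emeasure N {u \<in> space N. X(n:=u) \<in> E} \<partial>?P)"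
    by (intro nn_integral_cong arg_cong2[where f=emeasure]) (auto simp: space_pair_measure)
  finally show ?thesis .
qed

lemma upd_measurable:
  fixes N :: "real measure"
  assumes that: "a \<in> space N"
  shows "(\<lambda>X. X(n := a)) \<in> measurable (PiM (UNIV - {n}) (\<lambda>_. N)) (PiM UNIV (\<lambda>_. N))"
proof -
  have ins: "insert n (UNIV - {n}) = UNIV" by auto
  have "(\<lambda>X. X(n := a)) \<in> measurable (PiM (UNIV - {n}) (\<lambda>_. N)) (PiM (insert n (UNIV - {n})) (\<lambda>_. N))"
    using that by measurable
  then show ?thesis unfolding ins .
qed

lemma key_step:
  fixes N :: "real measure" and \<phi> :: "real \<Rightarrow> real \<Rightarrow> real" and c :: "(nat \<Rightarrow> real) \<Rightarrow> real"
  assumes N: "prob_space N" "sets N = sets borel"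
  assumes \<phi>m[measurable]: "(\<lambda>(x,y). \<phi> x y) \<in> borel_measurable (borel \<Otimes>\<^sub>M borel)"
  assumes pres: "\<And>a. distr N borel (\<phi> a) = N"
  assumes S: "S \<in> sets (PiM UNIV (\<lambda>_. N))"
    and Sdep: "\<And>\<delta> \<delta>'. (\<And>j. j < n \<Longrightarrow> \<delta> j = \<delta>' j) \<Longrightarrow> \<delta> \<in> S \<longleftrightarrow> \<delta>' \<in> S"
  assumes cm[measurable]: "c \<in> borel_measurable (PiM UNIV (\<lambda>_. N))"
    and cdep: "\<And>\<delta> \<delta>'. (\<And>j. j < n \<Longrightarrow> \<delta> j = \<delta>' j) \<Longrightarrow> c \<delta> = c \<delta>'"
  assumes B: "B \<in> sets borel"
  shows "emeasure (PiM UNIV (\<lambda>_. N)) {\<delta> \<in> S. \<phi> (c \<delta>) (\<delta> n) \<in> B} = emeasure (PiM UNIV (\<lambda>_. N)) S * emeasure N B"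
proof -
  let ?P = "PiM (UNIV - {n}) (\<lambda>_. N)" and ?PN = "PiM UNIV (\<lambda>_. N)"
  interpret N: prob_space N by fact
  interpret P': prob_space ?P by (intro prob_space_PiM N)
  have spN: "space N = UNIV" using space_PiM_borelish[OF N(2)] by simp
  have spP: "space ?PN = UNIV" using space_PiM_borelish(2)[OF N(2), of UNIV] by simp
  have sN[measurable_cong]: "sets N = sets borel" by (fact N(2))
  have um: "(\<lambda>X. X(n := 0)) \<in> measurable ?P ?PN"
    by (rule upd_measurable) (simp add: spN)
  define T where "T = (\<lambda>X. X(n := 0)) -` S \<inter> space ?P"
  have T: "T \<in> sets ?P" unfolding T_def by (rule measurable_sets[OF um S])
  have pres': "emeasure N {u \<in> space N. \<phi> a u \<in> B} = emeasure N B" for a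
  proof -
    have m: "\<phi> a \<in> measurable N borel" by measurable
    have "emeasure N B = emeasure (distr N borel (\<phi> a)) B" by (simp add: pres)
    also have "\<dots> = emeasure N (\<phi> a -` B \<inter> space N)" using B m by (simp add: emeasure_distr)
    finally show ?thesis by (simp add: vimage_def Int_def conj_commute)
  qed
  have Sd: "X(n:=u) \<in> S \<longleftrightarrow> X(n:=0) \<in> S" for X :: "nat \<Rightarrow> real" and u by (rule Sdep) simp
  have cd: "c (X(n:=u)) = c (X(n:=0))" for X :: "nat \<Rightarrow> real" and u by (rule cdep) simp
  have E: "{\<delta> \<in> S. \<phi> (c \<delta>) (\<delta> n) \<in> B} \<in> sets ?PN"
  proof -
    have "{\<delta> \<in> S. \<phi> (c \<delta>) (\<delta> n) \<in> B} = S \<inter> {\<delta> \<in> space ?PN. \<phi> (c \<delta>) (\<delta> n) \<in> B}"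
      by (auto simp: spP)
    also have "\<dots> \<in> sets ?PN" using S B by measurable
    finally show ?thesis .
  qed
  have "emeasure ?PN {\<delta> \<in> S. \<phi> (c \<delta>) (\<delta> n) \<in> B} =
     (\<integral>\<^sup>+X. emeasure N {u \<in> space N. X(n:=u) \<in> {\<delta> \<in> S. \<phi> (c \<delta>) (\<delta> n) \<in> B}} \<partial>?P)"
    by (rule fiber_emeasure[OF N E])
  also have "\<dots> = (\<integral>\<^sup>+X. emeasure N B * indicator T X \<partial>?P)"
  proof (intro nn_integral_cong)
    fix X assume X: "X \<in> space ?P"
    show "emeasure N {u \<in> space N. X(n:=u) \<in> {\<delta> \<in> S. \<phi> (c \<delta>) (\<delta> n) \<in> B}} = emeasure N B * indicator T X"
    proof (cases "X(n:=0) \<in> S")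
      case True
      have "{u \<in> space N. X(n:=u) \<in> {\<delta> \<in> S. \<phi> (c \<delta>) (\<delta> n) \<in> B}} = {u \<in> space N. \<phi> (c (X(n:=0))) u \<in> B}"
        using True Sd by auto (metis cd)+
      then show ?thesis using True X pres' by (simp add: T_def)
    next
      case False
      have e: "{u \<in> space N. X(n:=u) \<in> {\<delta> \<in> S. \<phi> (c \<delta>) (\<delta> n) \<in> B}} = {}"
        using False Sd by auto
      show ?thesis unfolding e using False X by (simp add: T_def)
    qed
  qed
  also have "\<dots> = emeasure N B * emeasure ?P T"
    using T by (simp add: nn_integral_cmult_indicator)
  also have "emeasure ?P T = emeasure ?PN S"
  proof -
    have "emeasure ?PN S = (\<integral>\<^sup>+X. emeasure N {u \<in> space N. X(n:=u) \<in> S} \<partial>?P)"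
      by (rule fiber_emeasure[OF N S])
    also have "\<dots> = (\<integral>\<^sup>+X. indicator T X \<partial>?P)"
    proof (intro nn_integral_cong)
      fix X assume X: "X \<in> space ?P"
      show "emeasure N {u \<in> space N. X(n:=u) \<in> S} = indicator T X"
      proof (cases "X(n:=0) \<in> S")
        case True
        have "{u \<in> space N. X(n:=u) \<in> S} = space N"
          using True Sd by auto
        then show ?thesis using True X by (simp add: T_def N.emeasure_space_1)
      next
        case False
        have e: "{u \<in> space N. X(n:=u) \<in> S} = {}"
          using False Sd by auto
        show ?thesis unfolding e using False X by (simp add: T_def)
      qed
    qed
    also have "\<dots> = emeasure ?P T" using T by simp
    finally show ?thesis by simp
  qed
  finally show ?thesis by (simp add: mult.commute)
qed

lemma tri_distr:
  fixes N :: "real measure" and \<phi> :: "real \<Rightarrow> real \<Rightarrow> real" and s :: "nat \<Rightarrow> (nat \<Rightarrow> real) \<Rightarrow> real"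
  assumes N: "prob_space N" "sets N = sets borel"
  assumes \<phi>m[measurable]: "(\<lambda>(x,y). \<phi> x y) \<in> borel_measurable (borel \<Otimes>\<^sub>M borel)"
  assumes pres: "\<And>a. distr N borel (\<phi> a) = N"
  assumes sm[measurable]: "\<And>k. s k \<in> borel_measurable (PiM UNIV (\<lambda>_. N))"
    and sdep: "\<And>k \<delta> \<delta>'. (\<And>j. j < k \<Longrightarrow> \<delta> j = \<delta>' j) \<Longrightarrow> s k \<delta> = s k \<delta>'"
  shows "distr (PiM UNIV (\<lambda>_. N)) (PiM UNIV (\<lambda>_. N)) (\<lambda>\<delta> k. \<phi> (s k \<delta>) (\<delta> k)) = PiM UNIV (\<lambda>_. N)"
proof -
  let ?PN = "PiM UNIV (\<lambda>_. N)"
  interpret N: prob_space N by fact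
  interpret PN: prob_space ?PN by (intro prob_space_PiM N)
  have spN: "space N = UNIV" using space_PiM_borelish[OF N(2)] by simp
  have spP: "space ?PN = UNIV" using space_PiM_borelish(2)[OF N(2), of UNIV] by simp
  have sN[measurable_cong]: "sets N = sets borel" by (fact N(2))
  have L: "emeasure ?PN {\<delta> \<in> space ?PN. \<forall>j\<in>{..<n}. \<phi> (s j \<delta>) (\<delta> j) \<in> B j} = (\<Prod>j<n. emeasure N (B j))"
    if B: "\<And>j. B j \<in> sets borel" for n B
  proof (induction n)
    case 0
    then show ?case by (simp add: PN.emeasure_space_1)
  next
    case (Suc n)
    let ?S = "{\<delta> \<in> space ?PN. \<forall>j\<in>{..<n}. \<phi> (s j \<delta>) (\<delta> j) \<in> B j}"
    have Sm: "?S \<in> sets ?PN" using B by measurable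
    have eq: "{\<delta> \<in> space ?PN. \<forall>j\<in>{..<Suc n}. \<phi> (s j \<delta>) (\<delta> j) \<in> B j} = {\<delta> \<in> ?S. \<phi> (s n \<delta>) (\<delta> n) \<in> B n}"
      by (auto simp: less_Suc_eq)
    have "emeasure ?PN {\<delta> \<in> ?S. \<phi> (s n \<delta>) (\<delta> n) \<in> B n} = emeasure ?PN ?S * emeasure N (B n)"
    proof (rule key_step[OF N \<phi>m pres Sm _ sm _ B])
      fix \<delta> \<delta>' :: "nat \<Rightarrow> real" assume a: "\<And>j. j < n \<Longrightarrow> \<delta> j = \<delta>' j"
      have "s j \<delta> = s j \<delta>'" if "j < n" for j using a that by (intro sdep) auto
      then show "\<delta> \<in> ?S \<longleftrightarrow> \<delta>' \<in> ?S" using a by (auto simp: spP)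
    next
      fix \<delta> \<delta>' :: "nat \<Rightarrow> real" assume a: "\<And>j. j < n \<Longrightarrow> \<delta> j = \<delta>' j"
      then show "s n \<delta> = s n \<delta>'" by (intro sdep) auto
    qed
    then show ?case unfolding eq using Suc by simp
  qed
  have Gm: "(\<lambda>\<delta> k. \<phi> (s k \<delta>) (\<delta> k)) \<in> measurable ?PN ?PN"
    by (rule measurable_PiM_single') (auto simp: spN)
  show ?thesis
  proof (rule measure_eqI_PiM_infinite)
    show "finite_measure (distr ?PN ?PN (\<lambda>\<delta> k. \<phi> (s k \<delta>) (\<delta> k)))"
      using PN.prob_space_distr[OF Gm] by (auto simp: prob_space_def)
  next
    fix J A assume J: "finite J" "J \<subseteq> (UNIV::nat set)" and A: "\<And>i. i \<in> J \<Longrightarrow> A i \<in> sets N"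
    obtain n where n: "J \<subseteq> {..<n}" using finite_nat_bounded[OF J(1)] by auto
    define B where "B j = (if j \<in> J then A j else UNIV)" for j
    have B: "B j \<in> sets borel" for j using A by (auto simp: B_def sN[symmetric])
    have "emeasure (distr ?PN ?PN (\<lambda>\<delta> k. \<phi> (s k \<delta>) (\<delta> k))) (prod_emb UNIV (\<lambda>_. N) J (Pi\<^sub>E J A))
       = emeasure ?PN ((\<lambda>\<delta> k. \<phi> (s k \<delta>) (\<delta> k)) -` prod_emb UNIV (\<lambda>_. N) J (Pi\<^sub>E J A) \<inter> space ?PN)"
      using J A by (intro emeasure_distr Gm sets_PiM_I) auto
    also have "(\<lambda>\<delta> k. \<phi> (s k \<delta>) (\<delta> k)) -` prod_emb UNIV (\<lambda>_. N) J (Pi\<^sub>E J A) \<inter> space ?PN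
       = {\<delta> \<in> space ?PN. \<forall>j\<in>{..<n}. \<phi> (s j \<delta>) (\<delta> j) \<in> B j}"
      using n by (auto simp: prod_emb_def spP spN B_def PiE_iff space_PiM) blast
    also have "emeasure ?PN \<dots> = (\<Prod>j<n. emeasure N (B j))"
      by (rule L[OF B])
    also have "\<dots> = (\<Prod>j\<in>J. emeasure N (A j))"
      using n by (intro prod.mono_neutral_cong_right) (auto simp: B_def spN[symmetric] N.emeasure_space_1)
    also have "\<dots> = emeasure ?PN (prod_emb UNIV (\<lambda>_. N) J (Pi\<^sub>E J A))"
      using J A N(1) by (intro emeasure_PiM_emb[symmetric]) auto
    finally show "emeasure (distr ?PN ?PN (\<lambda>\<delta> k. \<phi> (s k \<delta>) (\<delta> k))) (prod_emb UNIV (\<lambda>_. N) J (Pi\<^sub>E J A))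
       = emeasure ?PN (prod_emb UNIV (\<lambda>_. N) J (Pi\<^sub>E J A))" .
  qed simp_all
qed

lemma mv_meas[measurable (raw)]:
  fixes A :: "real^'n^'m"
  shows "f \<in> borel_measurable M \<Longrightarrow> (\<lambda>x. A *v f x) \<in> borel_measurable M"
  using measurable_compose[OF _ borel_measurable_continuous_onI[OF matrix_vector_mult_linear_continuous_on]] by blast

lemma uq_measurable2[measurable]: "uniform_quantizer \<Delta> \<in> borel_measurable borel"
  unfolding uniform_quantizer_def[abs_def] by measurable

context
  fixes A :: "real^'n^'n" and Bw :: "real^'m^'n" and Br :: "real^'n"
    and Ct :: "real^'n" and Dtw :: "real^'m" and \<Delta> :: real and h :: nat
begin

fun xd :: "(nat \<Rightarrow> real^'m) \<times> (real^'n) \<Rightarrow> (nat \<Rightarrow> real) \<Rightarrow> nat \<Rightarrow> real^'n" where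
  "xd \<xi> \<delta> 0 = snd \<xi>"
| "xd \<xi> \<delta> (Suc k) = A *v xd \<xi> \<delta> k + Bw *v fst \<xi> k +
     (if h \<le> k then uniform_quantizer \<Delta> (Ct \<bullet> xd \<xi> \<delta> (k-h) + Dtw \<bullet> fst \<xi> (k-h) + \<delta> (k-h)) - \<delta> (k-h) else 0) *\<^sub>R Br"

definition td :: "(nat \<Rightarrow> real^'m) \<times> (real^'n) \<Rightarrow> (nat \<Rightarrow> real) \<Rightarrow> nat \<Rightarrow> real" where
  "td \<xi> \<delta> k = Ct \<bullet> xd \<xi> \<delta> k + Dtw \<bullet> fst \<xi> k"

lemma xd_dep: "(\<And>j. j < k \<Longrightarrow> \<delta> j = \<delta>' j) \<Longrightarrow> xd \<xi> \<delta> k = xd \<xi> \<delta>' k"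
proof (induction k arbitrary: rule: less_induct)
  case (less k)
  show ?case
  proof (cases k)
    case 0 then show ?thesis by simp
  next
    case (Suc k')
    have "xd \<xi> \<delta> k' = xd \<xi> \<delta>' k'" using less Suc by auto
    moreover have "h \<le> k' \<Longrightarrow> xd \<xi> \<delta> (k'-h) = xd \<xi> \<delta>' (k'-h)" using less Suc by auto
    moreover have "h \<le> k' \<Longrightarrow> \<delta> (k'-h) = \<delta>' (k'-h)" using less Suc by auto
    ultimately show ?thesis using Suc by simp
  qed
qed

lemma td_dep: "(\<And>j. j < k \<Longrightarrow> \<delta> j = \<delta>' j) \<Longrightarrow> td \<xi> \<delta> k = td \<xi> \<delta>' k"
  unfolding td_def using xd_dep by metis

lemma xd_meas:
  assumes sN[measurable_cong]: "sets N = sets (borel::real measure)"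
  shows "(\<lambda>p. xd (snd p) (fst p) k) \<in> borel_measurable (PiM UNIV (\<lambda>_. N) \<Otimes>\<^sub>M (PiM UNIV (\<lambda>_. borel) \<Otimes>\<^sub>M borel))"
proof (induction k rule: less_induct)
  case (less k)
  show ?case
  proof (cases k)
    case 0 then show ?thesis by simp
  next
    case (Suc k')
    have [measurable]: "(\<lambda>p. xd (snd p) (fst p) k') \<in> borel_measurable (PiM UNIV (\<lambda>_. N) \<Otimes>\<^sub>M (PiM UNIV (\<lambda>_. borel) \<Otimes>\<^sub>M borel))"
      using less Suc by auto
    have [measurable]: "(\<lambda>p. xd (snd p) (fst p) (k'-h)) \<in> borel_measurable (PiM UNIV (\<lambda>_. N) \<Otimes>\<^sub>M (PiM UNIV (\<lambda>_. borel) \<Otimes>\<^sub>M borel))"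
      using less Suc by auto
    show ?thesis unfolding Suc xd.simps by measurable
  qed
qed

lemma td_meas:
  assumes sN[measurable_cong]: "sets N = sets (borel::real measure)"
  shows "(\<lambda>p. td (snd p) (fst p) k) \<in> borel_measurable (PiM UNIV (\<lambda>_. N) \<Otimes>\<^sub>M (PiM UNIV (\<lambda>_. borel) \<Otimes>\<^sub>M borel))"
  unfolding td_def using xd_meas[OF sN, measurable] by measurable

end

lemma pair_fiber_distr:
  assumes M1: "prob_space M1" and M2: "prob_space M2"
  assumes F: "F \<in> measurable (M1 \<Otimes>\<^sub>M M2) M1"
  assumes fib: "\<And>\<xi>. \<xi> \<in> space M2 \<Longrightarrow> distr M1 M1 (\<lambda>\<delta>. F (\<delta>, \<xi>)) = M1"
  shows "distr (M1 \<Otimes>\<^sub>M M2) (M1 \<Otimes>\<^sub>M M2) (\<lambda>p. (F p, snd p)) = M1 \<Otimes>\<^sub>M M2"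
proof -
  interpret M1: prob_space M1 by fact
  interpret M2: prob_space M2 by fact
  interpret pair_sigma_finite M1 M2 ..
  have H: "(\<lambda>p. (F p, snd p)) \<in> measurable (M1 \<Otimes>\<^sub>M M2) (M1 \<Otimes>\<^sub>M M2)"
    using F by measurable
  show ?thesis
  proof (rule measure_eqI)
    fix A assume "A \<in> sets (distr (M1 \<Otimes>\<^sub>M M2) (M1 \<Otimes>\<^sub>M M2) (\<lambda>p. (F p, snd p)))"
    then have A: "A \<in> sets (M1 \<Otimes>\<^sub>M M2)" by simp
    have "emeasure (distr (M1 \<Otimes>\<^sub>M M2) (M1 \<Otimes>\<^sub>M M2) (\<lambda>p. (F p, snd p))) A
        = emeasure (M1 \<Otimes>\<^sub>M M2) ((\<lambda>p. (F p, snd p)) -` A \<inter> space (M1 \<Otimes>\<^sub>M M2))"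
      using A H by (simp add: emeasure_distr)
    also have "\<dots> = (\<integral>\<^sup>+\<xi>. emeasure M1 ((\<lambda>x. (x, \<xi>)) -` ((\<lambda>p. (F p, snd p)) -` A \<inter> space (M1 \<Otimes>\<^sub>M M2))) \<partial>M2)"
      by (intro emeasure_pair_measure_alt2 measurable_sets[OF H A])
    also have "\<dots> = (\<integral>\<^sup>+\<xi>. emeasure M1 ((\<lambda>x. (x, \<xi>)) -` A) \<partial>M2)"
    proof (intro nn_integral_cong)
      fix \<xi> assume \<xi>: "\<xi> \<in> space M2"
      have m1: "(\<lambda>x. (x, \<xi>)) \<in> measurable M1 (M1 \<Otimes>\<^sub>M M2)" using \<xi> by measurable
      have m2: "(\<lambda>\<delta>. F (\<delta>, \<xi>)) \<in> measurable M1 M1" using measurable_compose[OF m1 F] by (simp add: comp_def)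
      have As: "(\<lambda>x. (x, \<xi>)) -` A \<inter> space M1 \<in> sets M1" by (rule measurable_sets[OF m1 A])
      have "(\<lambda>x. (x, \<xi>)) -` ((\<lambda>p. (F p, snd p)) -` A \<inter> space (M1 \<Otimes>\<^sub>M M2))
          = (\<lambda>\<delta>. F (\<delta>, \<xi>)) -` ((\<lambda>x. (x, \<xi>)) -` A \<inter> space M1) \<inter> space M1"
        using \<xi> measurable_space[OF m2] by (auto simp: space_pair_measure)
      also have "emeasure M1 \<dots> = emeasure (distr M1 M1 (\<lambda>\<delta>. F (\<delta>, \<xi>))) ((\<lambda>x. (x, \<xi>)) -` A \<inter> space M1)"
        using As m2 by (simp add: emeasure_distr)
      also have "\<dots> = emeasure M1 ((\<lambda>x. (x, \<xi>)) -` A \<inter> space M1)"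
        using fib[OF \<xi>] by simp
      also have "(\<lambda>x. (x, \<xi>)) -` A \<inter> space M1 = (\<lambda>x. (x, \<xi>)) -` A"
        using sets.sets_into_space[OF A] by (auto simp: space_pair_measure)
      finally show "emeasure M1 ((\<lambda>x. (x, \<xi>)) -` ((\<lambda>p. (F p, snd p)) -` A \<inter> space (M1 \<Otimes>\<^sub>M M2))) = emeasure M1 ((\<lambda>x. (x, \<xi>)) -` A)" .
    qed
    also have "\<dots> = emeasure (M1 \<Otimes>\<^sub>M M2) A"
      by (rule emeasure_pair_measure_alt2[OF A, symmetric])
    finally show "emeasure (distr (M1 \<Otimes>\<^sub>M M2) (M1 \<Otimes>\<^sub>M M2) (\<lambda>p. (F p, snd p))) A = emeasure (M1 \<Otimes>\<^sub>M M2) A" .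
  qed simp
qed

theorem lemma6:
  fixes M :: "'a measure"
    and A :: "real^'n^'n" and Bw :: "real^'m^'n" and Br :: "real^'n"
    and Ct :: "real^'n" and Dtw :: "real^'m"
    and Cz :: "real^'n^'p" and Dzw :: "real^'m^'p" and Dzr :: "real^'p"
    and \<Delta> :: real and h :: nat
    and w :: "nat \<Rightarrow> 'a \<Rightarrow> real^'m" and x0 :: "'a \<Rightarrow> real^'n" and d :: "nat \<Rightarrow> 'a \<Rightarrow> real"
    and x :: "nat \<Rightarrow> 'a \<Rightarrow> real^'n" and z :: "nat \<Rightarrow> 'a \<Rightarrow> real^'p"
    and t r rh :: "nat \<Rightarrow> 'a \<Rightarrow> real"
  assumes M: "prob_space M"
    and \<Delta>: "0 < \<Delta>"
    \<comment> \<open>white noise input, jointly second order with the initial state\<close>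
    and w_white: "white_noise M w"
    and x0_so: "second_order M x0"
    \<comment> \<open>dither: i.i.d., uniform on (-Delta/2, Delta/2), independent of (w, x0)\<close>
    and d_meas: "\<And>k. d k \<in> borel_measurable M"
    and d_indep: "prob_space.indep_vars M (\<lambda>_. borel) d UNIV"
    and d_unif: "\<And>k. distr M lborel (d k) = unif_quant_noise \<Delta>"
    and d_indep_wx: "indep_rv M
           (PiM UNIV (\<lambda>_. borel)) (\<lambda>\<omega> k. d k \<omega>)
           (PiM UNIV (\<lambda>_. borel) \<Otimes>\<^sub>M borel) (\<lambda>\<omega>. (\<lambda>k. w k \<omega>, x0 \<omega>))"
    \<comment> \<open>plant: state-space realization of the proper rational transfer matrix,
        with the r_h-to-t channel strictly proper (no feedthrough)\<close>
    and x_init: "\<And>\<omega>. x 0 \<omega> = x0 \<omega>"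
    and x_step: "\<And>k \<omega>. x (Suc k) \<omega> = A *v x k \<omega> + Bw *v w k \<omega> + rh k \<omega> *\<^sub>R Br"
    and z_out: "\<And>k \<omega>. z k \<omega> = Cz *v x k \<omega> + Dzw *v w k \<omega> + rh k \<omega> *\<^sub>R Dzr"
    and t_out: "\<And>k \<omega>. t k \<omega> = Ct \<bullet> x k \<omega> + Dtw \<bullet> w k \<omega>"
    \<comment> \<open>ECDQ with lossless coding and channel delay h\<close>
    and r_def: "\<And>k \<omega>. r k \<omega> = uniform_quantizer \<Delta> (t k \<omega> + d k \<omega>) - d k \<omega>"
    and rh_def: "\<And>k \<omega>. rh k \<omega> = (if h \<le> k then r (k - h) \<omega> else 0)"
  shows "prob_space.indep_vars M (\<lambda>_. borel) (\<lambda>k \<omega>. r k \<omega> - t k \<omega>) UNIV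
       \<and> (\<forall>k. distr M lborel (\<lambda>\<omega>. r k \<omega> - t k \<omega>) = unif_quant_noise \<Delta>)
       \<and> indep_rv M
           (PiM UNIV (\<lambda>_. borel)) (\<lambda>\<omega> k. r k \<omega> - t k \<omega>)
           (PiM UNIV (\<lambda>_. borel) \<Otimes>\<^sub>M borel) (\<lambda>\<omega>. (\<lambda>k. w k \<omega>, x0 \<omega>))"
proof -
  interpret prob_space M by (rule M)
  define U where "U = unif_quant_noise \<Delta>"
  have U: "prob_space U"
    unfolding U_def unif_quant_noise_def using \<Delta> by (intro prob_space_uniform_measure) auto
  have sU[measurable_cong]: "sets U = sets borel" by (simp add: U_def unif_quant_noise_def)
  define PB where "PB = PiM UNIV (\<lambda>_::nat. borel :: real measure)"
  define PU where "PU = PiM UNIV (\<lambda>_::nat. U)"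
  have sPU: "sets PU = sets PB" unfolding PU_def PB_def by (rule sets_PiM_cong) (auto simp: sU)
  have PUp: "prob_space PU" unfolding PU_def by (intro prob_space_PiM U)
  define S where "S = (PiM UNIV (\<lambda>_::nat. borel :: (real^'m) measure)) \<Otimes>\<^sub>M (borel :: (real^'n) measure)"
  define Xi where "Xi = (\<lambda>\<omega>. ((\<lambda>k. w k \<omega>), x0 \<omega>))"
  define D where "D = (\<lambda>\<omega> k. d k \<omega>)"
  define \<phi> where "\<phi> = (\<lambda>c u. uniform_quantizer \<Delta> (c+u) - (c+u))"
  define F where "F = (\<lambda>p::(nat\<Rightarrow>real) \<times> ((nat \<Rightarrow> real^'m) \<times> (real^'n)). \<lambda>k. \<phi> (td A Bw Br Ct Dtw \<Delta> h (snd p) (fst p) k) (fst p k))"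
  have \<phi>m[measurable]: "(\<lambda>(x,y). \<phi> x y) \<in> borel_measurable (borel \<Otimes>\<^sub>M borel)"
    unfolding \<phi>_def by measurable
  have wm[measurable]: "\<And>k. w k \<in> borel_measurable M" using w_white by (simp add: white_noise_def)
  have x0m[measurable]: "x0 \<in> borel_measurable M" using x0_so by (simp add: second_order_def)
  have Xim: "Xi \<in> measurable M S"
  proof -
    have "(\<lambda>\<omega> k. w k \<omega>) \<in> measurable M (PiM UNIV (\<lambda>_::nat. borel :: (real^'m) measure))"
      by (rule measurable_PiM_single') auto
    then show ?thesis unfolding Xi_def S_def by measurable
  qed
  have Dm: "D \<in> measurable M PB"
    unfolding D_def PB_def by (rule measurable_PiM_single') (auto simp: d_meas)
  have x_eq: "x k \<omega> = xd A Bw Br Ct Dtw \<Delta> h (Xi \<omega>) (D \<omega>) k" for k \<omega>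
  proof (induction k rule: less_induct)
    case (less k)
    show ?case
    proof (cases k)
      case 0 then show ?thesis by (simp add: x_init Xi_def)
    next
      case (Suc k')
      have i1: "x k' \<omega> = xd A Bw Br Ct Dtw \<Delta> h (Xi \<omega>) (D \<omega>) k'" using less Suc by simp
      have i2: "x (k'-h) \<omega> = xd A Bw Br Ct Dtw \<Delta> h (Xi \<omega>) (D \<omega>) (k'-h)" using less Suc by simp
      show ?thesis unfolding Suc x_step xd.simps rh_def r_def t_out i1 i2
        by (simp add: Xi_def D_def)
    qed
  qed
  have t_eq: "t k \<omega> = td A Bw Br Ct Dtw \<Delta> h (Xi \<omega>) (D \<omega>) k" for k \<omega>
    by (simp add: t_out x_eq td_def Xi_def)
  have e_eq: "(\<lambda>k. r k \<omega> - t k \<omega>) = F (D \<omega>, Xi \<omega>)" for \<omega>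
  proof (rule ext)
    fix k
    have "F (D \<omega>, Xi \<omega>) k = \<phi> (t k \<omega>) (d k \<omega>)"
      unfolding F_def fst_conv snd_conv t_eq[symmetric] by (simp add: D_def)
    then show "r k \<omega> - t k \<omega> = F (D \<omega>, Xi \<omega>) k"
      by (simp add: \<phi>_def r_def algebra_simps)
  qed
  have Fm: "F \<in> measurable (PB \<Otimes>\<^sub>M S) PB"
    unfolding F_def PB_def
  proof (rule measurable_PiM_single')
    fix k :: nat
    have [measurable]: "(\<lambda>p. td A Bw Br Ct Dtw \<Delta> h (snd p) (fst p) k) \<in> borel_measurable (PiM UNIV (\<lambda>_::nat. borel :: real measure) \<Otimes>\<^sub>M S)"
      unfolding S_def by (rule td_meas) simp
    show "(\<lambda>p. \<phi> (td A Bw Br Ct Dtw \<Delta> h (snd p) (fst p) k) (fst p k)) \<in> borel_measurable (PiM UNIV (\<lambda>_::nat. borel :: real measure) \<Otimes>\<^sub>M S)"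
      by measurable
  qed auto
  have PXp: "prob_space (distr M S Xi)" by (rule prob_space_distr[OF Xim])
  have sPX: "sets (distr M S Xi) = sets S" by simp
  have spPX: "space (distr M S Xi) = space S" by simp
  have sPP: "sets (PU \<Otimes>\<^sub>M distr M S Xi) = sets (PB \<Otimes>\<^sub>M S)"
    by (rule sets_pair_measure_cong[OF sPU sPX])
  have dB: "distr M borel (d i) = U" for i
  proof -
    have "distr M borel (d i) = distr M lborel (d i)" by (rule distr_cong) auto
    then show ?thesis using d_unif by (simp add: U_def)
  qed
  have DU: "distr M PB D = PU"
  proof -
    have "distr M (PiM UNIV (\<lambda>_. borel)) (\<lambda>x. \<lambda>i\<in>UNIV. d i x) = (PiM UNIV (\<lambda>i. distr M borel (d i)))"
      using indep_vars_iff_distr_eq_PiM[of UNIV d "\<lambda>_. borel"] d_indep d_meas by simp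
    then show ?thesis by (simp add: dB PB_def PU_def D_def restrict_UNIV)
  qed
  have ind0: "indep_rv M PB D S Xi"
    using d_indep_wx unfolding PB_def S_def D_def Xi_def .
  have Z: "distr M (PB \<Otimes>\<^sub>M S) (\<lambda>\<omega>. (D \<omega>, Xi \<omega>)) = PU \<Otimes>\<^sub>M distr M S Xi"
    using ind0 indep_rv_distr_eq[OF M Dm Xim] DU by simp
  have FmU: "F \<in> measurable (PU \<Otimes>\<^sub>M distr M S Xi) PU"
    using Fm by (simp add: measurable_cong_sets[OF sPP sPU])
  have fib: "distr PU PU (\<lambda>\<delta>. F (\<delta>, \<xi>)) = PU" if \<xi>: "\<xi> \<in> space (distr M S Xi)" for \<xi>
  proof -
    have \<xi>S: "\<xi> \<in> space S" using \<xi> by simp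
    have sm: "(\<lambda>\<delta>. td A Bw Br Ct Dtw \<Delta> h \<xi> \<delta> k) \<in> borel_measurable (PiM UNIV (\<lambda>_. U))" for k
    proof -
      have m1: "(\<lambda>p. td A Bw Br Ct Dtw \<Delta> h (snd p) (fst p) k) \<in> borel_measurable (PiM UNIV (\<lambda>_. U) \<Otimes>\<^sub>M S)"
        unfolding S_def by (rule td_meas[OF sU])
      have m2: "(\<lambda>\<delta>. (\<delta>, \<xi>)) \<in> measurable (PiM UNIV (\<lambda>_. U)) (PiM UNIV (\<lambda>_. U) \<Otimes>\<^sub>M S)"
        using \<xi>S by measurable
      show ?thesis using measurable_compose[OF m2 m1] by (simp add: comp_def)
    qed
    have pres: "distr U borel (\<phi> a) = U" for a
      using rot_distr[OF \<Delta>, of a] by (simp add: U_def \<phi>_def)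
    have "distr PU PU (\<lambda>\<delta> k. \<phi> ((\<lambda>k \<delta>. td A Bw Br Ct Dtw \<Delta> h \<xi> \<delta> k) k \<delta>) (\<delta> k)) = PU"
      unfolding PU_def
      by (rule tri_distr[OF U sU \<phi>m pres sm]) (rule td_dep)
    then show ?thesis by (simp add: F_def)
  qed
  have H: "distr (PU \<Otimes>\<^sub>M distr M S Xi) (PU \<Otimes>\<^sub>M distr M S Xi) (\<lambda>p. (F p, snd p)) = PU \<Otimes>\<^sub>M distr M S Xi"
    by (rule pair_fiber_distr[OF PUp PXp FmU fib])
  have Hm: "(\<lambda>p. (F p, snd p)) \<in> measurable (PB \<Otimes>\<^sub>M S) (PB \<Otimes>\<^sub>M S)"
    using Fm by measurable
  have Zm: "(\<lambda>\<omega>. (D \<omega>, Xi \<omega>)) \<in> measurable M (PB \<Otimes>\<^sub>M S)"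
    using Dm Xim by measurable
  define Em where "Em = (\<lambda>\<omega> k. r k \<omega> - t k \<omega>)"
  have Em_eq: "Em = (\<lambda>\<omega>. F (D \<omega>, Xi \<omega>))" using e_eq by (simp add: Em_def fun_eq_iff)
  have EZm: "(\<lambda>\<omega>. (Em \<omega>, Xi \<omega>)) \<in> measurable M (PB \<Otimes>\<^sub>M S)"
    using measurable_compose[OF Zm Hm] by (simp add: comp_def Em_eq)
  have Emm: "Em \<in> measurable M PB"
    using measurable_compose[OF Zm Fm] by (simp add: comp_def Em_eq)
  have EZ: "distr M (PB \<Otimes>\<^sub>M S) (\<lambda>\<omega>. (Em \<omega>, Xi \<omega>)) = PU \<Otimes>\<^sub>M distr M S Xi"
  proof -
    have "distr M (PB \<Otimes>\<^sub>M S) (\<lambda>\<omega>. (Em \<omega>, Xi \<omega>)) = distr M (PB \<Otimes>\<^sub>M S) ((\<lambda>p. (F p, snd p)) \<circ> (\<lambda>\<omega>. (D \<omega>, Xi \<omega>)))"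
      by (simp add: comp_def Em_eq)
    also have "\<dots> = distr (distr M (PB \<Otimes>\<^sub>M S) (\<lambda>\<omega>. (D \<omega>, Xi \<omega>))) (PB \<Otimes>\<^sub>M S) (\<lambda>p. (F p, snd p))"
      by (rule distr_distr[OF Hm Zm, symmetric])
    also have "\<dots> = distr (PU \<Otimes>\<^sub>M distr M S Xi) (PU \<Otimes>\<^sub>M distr M S Xi) (\<lambda>p. (F p, snd p))"
      unfolding Z by (rule distr_cong) (simp_all add: sPP sets_pair_measure_cong[OF sPU refl])
    finally show ?thesis using H by simp
  qed
  have EU: "distr M PB Em = PU"
  proof -
    have "distr M PB Em = distr M PB (fst \<circ> (\<lambda>\<omega>. (Em \<omega>, Xi \<omega>)))" by (simp add: comp_def)
    also have "\<dots> = distr (distr M (PB \<Otimes>\<^sub>M S) (\<lambda>\<omega>. (Em \<omega>, Xi \<omega>))) PB fst"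
      by (rule distr_distr[OF measurable_fst EZm, symmetric])
    also have "\<dots> = distr (PU \<Otimes>\<^sub>M distr M S Xi) PU fst"
      unfolding EZ by (rule distr_cong) (auto simp: sPU)
    also have "\<dots> = PU" by (rule prob_space.distr_pair_fst[OF PXp])
    finally show ?thesis .
  qed
  have ek_meas: "(\<lambda>\<omega>. r k \<omega> - t k \<omega>) \<in> borel_measurable M" for k
  proof -
    have "(\<lambda>\<omega>. Em \<omega> k) \<in> borel_measurable M"
      using Emm unfolding PB_def by measurable
    then show ?thesis by (simp add: Em_def)
  qed
  have eB: "distr M borel (\<lambda>\<omega>. r k \<omega> - t k \<omega>) = U" for k
  proof -
    have "distr M borel (\<lambda>\<omega>. r k \<omega> - t k \<omega>) = distr M borel ((\<lambda>\<delta>. \<delta> k) \<circ> Em)" by (simp add: comp_def Em_def)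
    also have "\<dots> = distr (distr M PB Em) borel (\<lambda>\<delta>. \<delta> k)"
      by (rule distr_distr[symmetric, OF _ Emm]) (simp add: PB_def)
    also have "\<dots> = distr PU U (\<lambda>\<delta>. \<delta> k)"
      unfolding EU by (rule distr_cong) (auto simp: sU)
    also have "\<dots> = U" unfolding PU_def by (rule distr_PiM_component) (auto simp: U)
    finally show ?thesis .
  qed
  show ?thesis
  proof (intro conjI allI)
    have "distr M (PiM UNIV (\<lambda>_. borel)) (\<lambda>x. \<lambda>i\<in>UNIV. r i x - t i x) = (PiM UNIV (\<lambda>i. distr M borel (\<lambda>\<omega>. r i \<omega> - t i \<omega>)))"
      using EU by (simp add: eB PB_def PU_def Em_def restrict_UNIV)
    then show "indep_vars (\<lambda>_. borel) (\<lambda>k \<omega>. r k \<omega> - t k \<omega>) UNIV"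
      using indep_vars_iff_distr_eq_PiM[of UNIV "\<lambda>k \<omega>. r k \<omega> - t k \<omega>" "\<lambda>_. borel"] ek_meas by simp
  next
    fix k
    have "distr M lborel (\<lambda>\<omega>. r k \<omega> - t k \<omega>) = distr M borel (\<lambda>\<omega>. r k \<omega> - t k \<omega>)" by (rule distr_cong) auto
    then show "distr M lborel (\<lambda>\<omega>. r k \<omega> - t k \<omega>) = unif_quant_noise \<Delta>" by (simp add: eB U_def)
  next
    have "indep_rv M PB Em S Xi"
      using indep_rv_distr_eq[OF M Emm Xim] EU EZ by simp
    then show "indep_rv M (PiM UNIV (\<lambda>_. borel)) (\<lambda>\<omega> k. r k \<omega> - t k \<omega>)
           (PiM UNIV (\<lambda>_. borel) \<Otimes>\<^sub>M borel) (\<lambda>\<omega>. (\<lambda>k. w k \<omega>, x0 \<omega>))"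
      unfolding PB_def S_def Em_def Xi_def .
  qed
qed

end
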